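(* Let $L$ be an oriented link in $S^3$ equipped with its $0$-framing, and let $p(L)$ denote the same framed link with the orientation forgotten. Then $$\sum_{L'\in OR(p(L))} (-1)^{\mathrm{com}(L')}a^{fr(L')} \;=\; (-1)^{\mathrm{com}(L)}\sum_{S\subset L} a^{-4\,\mathrm{lk}(S,L-S)},$$ where the right-hand sum runs over all sublinks $S$ of $L$ (unions of components, including $S=\emptyset$ and $S=L$), and $\mathrm{lk}(S,L-S)$ is the total linking number between $S$ and its complementary sublink $L-S$ (with orientations inherited from $L$).
   Context: For an unoriented framed link $P$, $OR(P)$ is the set of all oriented framed links obtained by choosing an orientation of each component of $P$ while keeping the framing. $\mathrm{com}(L')$ is the number of components. For an oriented framed link $L'$, $fr(L')$ is the number of right-hand full twists that must be removed from the framing of $L'$ to reach the $0$-framing (the framing induced by a Seifert surface of the oriented link $L'$); equivalently $fr(L')=\mathrm{lk}(L',L'')$ with $L''$ the push-off of $L'$ along its framing, oriented parallel to $L'$. The $0$-framing of the oriented link $L$ is the one with $fr(L)=0$. *)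

theory Defs
  imports "HOL-Analysis.Analysis"
begin

text \<open>Components of a link are smooth knots in R^3 (a link in S^3 can be isotoped
off a point), parametrised as 1-periodic C1 regular maps injective on [0,1).\<close>

definition smooth_knot :: "(real \<Rightarrow> real^3) \<Rightarrow> bool" where
  "smooth_knot \<gamma> \<longleftrightarrow> (\<forall>t. \<gamma> (t + 1) = \<gamma> t) \<and> \<gamma> C1_differentiable_on UNIV
     \<and> inj_on \<gamma> {0..<1} \<and> (\<forall>t. vector_derivative \<gamma> (at t) \<noteq> 0)"

definition smooth_link :: "nat \<Rightarrow> (nat \<Rightarrow> real \<Rightarrow> real^3) \<Rightarrow> bool" where
  "smooth_link n \<gamma> \<longleftrightarrow> (\<forall>i<n. smooth_knot (\<gamma> i))
     \<and> (\<forall>i<n. \<forall>j<n. i \<noteq> j \<longrightarrow> range (\<gamma> i) \<inter> range (\<gamma> j) = {})"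

definition rev_curve :: "(real \<Rightarrow> real^3) \<Rightarrow> real \<Rightarrow> real^3" where
  "rev_curve \<gamma> = (\<lambda>t. \<gamma> (- t))"

definition gauss_lk :: "(real \<Rightarrow> real^3) \<Rightarrow> (real \<Rightarrow> real^3) \<Rightarrow> real" where
  "gauss_lk \<gamma> \<delta> = 1 / (4 * pi) *
     integral (cbox (0,0) (1,1))
       (\<lambda>p. ((\<gamma> (fst p) - \<delta> (snd p)) \<bullet>
              cross3 (vector_derivative \<gamma> (at (fst p))) (vector_derivative \<delta> (at (snd p))))
            / norm (\<gamma> (fst p) - \<delta> (snd p)) ^ 3)"

definition framing_field :: "(real \<Rightarrow> real^3) \<Rightarrow> (real \<Rightarrow> real^3) \<Rightarrow> bool" where
  "framing_field \<gamma> v \<longleftrightarrow> (\<forall>t. v (t + 1) = v t) \<and> v C1_differentiable_on UNIV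
     \<and> (\<forall>t. v t \<noteq> 0 \<and> v t \<bullet> vector_derivative \<gamma> (at t) = 0)"

definition is_pushoff :: "nat \<Rightarrow> (nat \<Rightarrow> real \<Rightarrow> real^3) \<Rightarrow> nat \<Rightarrow> (real \<Rightarrow> real^3)
    \<Rightarrow> (real \<Rightarrow> real^3) \<Rightarrow> bool" where
  "is_pushoff n \<gamma> j v \<delta> \<longleftrightarrow> (\<exists>\<epsilon>>0. \<delta> = (\<lambda>t. \<gamma> j t + \<epsilon> *\<^sub>R v t) \<and>
     (\<forall>e. 0 < e \<and> e \<le> \<epsilon> \<longrightarrow> (\<forall>i<n. \<forall>s t. \<gamma> i s \<noteq> \<gamma> j t + e *\<^sub>R v t)))"

definition orient :: "nat set \<Rightarrow> (nat \<Rightarrow> real \<Rightarrow> real^3) \<Rightarrow> nat \<Rightarrow> real \<Rightarrow> real^3" where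
  "orient R \<gamma> = (\<lambda>i. if i \<in> R then rev_curve (\<gamma> i) else \<gamma> i)"

text \<open>fr(L) = lk(L, L''), L'' the push-off (oriented parallel to L).\<close>
definition fr :: "nat \<Rightarrow> (nat \<Rightarrow> real \<Rightarrow> real^3) \<Rightarrow> (nat \<Rightarrow> real \<Rightarrow> real^3) \<Rightarrow> real" where
  "fr n \<gamma> \<delta> = (\<Sum>i<n. \<Sum>j<n. gauss_lk (\<gamma> i) (\<delta> j))"

definition lk_sub :: "nat \<Rightarrow> (nat \<Rightarrow> real \<Rightarrow> real^3) \<Rightarrow> nat set \<Rightarrow> real" where
  "lk_sub n \<gamma> S = (\<Sum>i\<in>S. \<Sum>j\<in>{..<n} - S. gauss_lk (\<gamma> i) (\<gamma> j))"

end

theory Submission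
  imports Defs
begin


definition cp :: "(real \<Rightarrow> real^3) \<Rightarrow> bool" where
  "cp c \<longleftrightarrow> (\<forall>t. c (t + 1) = c t) \<and> c C1_differentiable_on UNIV"

abbreviation D :: "(real \<Rightarrow> real^3) \<Rightarrow> real \<Rightarrow> real^3" where
  "D c t \<equiv> vector_derivative c (at t)"

lemma cp_diff: "cp c \<Longrightarrow> (c has_vector_derivative D c t) (at t)"
  unfolding cp_def C1_differentiable_on_eq by (auto simp: vector_derivative_works)

lemma cp_contD: "cp c \<Longrightarrow> continuous_on S (D c)"
  unfolding cp_def C1_differentiable_on_eq by (auto intro: continuous_on_subset)

lemma cp_cont: "cp c \<Longrightarrow> continuous_on S c"
  unfolding cp_def using C1_differentiable_imp_continuous_on continuous_on_subset by blast

lemma cp_per: "cp c \<Longrightarrow> c (t + 1) = c t"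
  unfolding cp_def by auto

lemma cp_perD: assumes "cp c" shows "D c (t + 1) = D c t"
proof -
  have "((\<lambda>x. c (x + 1)) has_vector_derivative D c (t+1)) (at t)"
    using vector_diff_chain_at[OF has_vector_derivative_add[OF has_vector_derivative_id has_vector_derivative_const[of 1]], of c "D c (t+1)" t] cp_diff[OF assms, of "t+1"]
    by (simp add: o_def)
  moreover have "(\<lambda>x. c (x + 1)) = c" using cp_per[OF assms] by auto
  ultimately show ?thesis using vector_derivative_at by fastforce
qed

definition gi :: "(real \<Rightarrow> real^3) \<Rightarrow> (real \<Rightarrow> real^3) \<Rightarrow> real \<times> real \<Rightarrow> real" where
  "gi c d = (\<lambda>p. ((c (fst p) - d (snd p)) \<bullet>
              cross3 (D c (fst p)) (D d (snd p))) / norm (c (fst p) - d (snd p)) ^ 3)"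

lemma gauss_gi: "gauss_lk c d = 1 / (4*pi) * integral (cbox (0,0) (1,1)) (gi c d)"
  unfolding gauss_lk_def gi_def ..

lemma gi_cont:
  assumes "cp c" "cp d" "range c \<inter> range d = {}"
  shows "continuous_on S (gi c d)"
proof -
  have ne: "c a \<noteq> d b" for a b using assms(3) by blast
  note [continuous_intros] = continuous_on_compose2[OF cp_cont[OF assms(1)] _ subset_UNIV]
     continuous_on_compose2[OF cp_cont[OF assms(2)] _ subset_UNIV]
     continuous_on_compose2[OF cp_contD[OF assms(1)] _ subset_UNIV]
     continuous_on_compose2[OF cp_contD[OF assms(2)] _ subset_UNIV] continuous_on_cross
  show ?thesis unfolding gi_def
    by (intro continuous_intros) (simp add: ne)
qed



lemma bb_cross: "bounded_bilinear (cross3 :: real^3 \<Rightarrow> real^3 \<Rightarrow> real^3)"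
  using bilinear_conv_bounded_bilinear bilinear_cross by blast

lemma norm_vderiv:
  fixes X :: "real \<Rightarrow> real^3"
  assumes "(X has_vector_derivative X') (at x within S)" "X x \<noteq> 0"
  shows "((\<lambda>x. norm (X x)) has_real_derivative (X x \<bullet> X') / norm (X x)) (at x within S)"
proof -
  have "((\<lambda>x. norm (X x)) has_derivative (*) ((X x \<bullet> X') / norm (X x))) (at x within S)"
    apply (rule has_derivative_eq_rhs[OF has_derivative_compose[OF assms(1)[unfolded has_vector_derivative_def] has_derivative_norm[OF assms(2)]]])
    by (auto simp: sgn_div_norm inner_commute divide_inverse ac_simps)
  then show ?thesis unfolding has_field_derivative_def
    by (simp add: ac_simps)
qed

lemma trip_deriv:
  fixes X A B :: "real \<Rightarrow> real^3"
  assumes X: "(X has_vector_derivative X') (at x within S)"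
    and A: "(A has_vector_derivative A') (at x within S)"
    and B: "(B has_vector_derivative B') (at x within S)"
    and nz: "X x \<noteq> 0"
  shows "((\<lambda>x. (X x \<bullet> cross3 (A x) (B x)) / norm (X x) ^ 3) has_real_derivative
     ((X' \<bullet> cross3 (A x) (B x) + X x \<bullet> cross3 A' (B x) + X x \<bullet> cross3 (A x) B') / norm (X x) ^ 3
      - 3 * (X x \<bullet> cross3 (A x) (B x)) * (X x \<bullet> X') / norm (X x) ^ 5)) (at x within S)"
proof -
  have c: "((\<lambda>x. cross3 (A x) (B x)) has_vector_derivative (cross3 (A x) B' + cross3 A' (B x))) (at x within S)"
    by (rule bounded_bilinear.has_vector_derivative[OF bb_cross A B])
  have n: "((\<lambda>x. X x \<bullet> cross3 (A x) (B x)) has_vector_derivative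
     (X x \<bullet> (cross3 (A x) B' + cross3 A' (B x)) + X' \<bullet> cross3 (A x) (B x))) (at x within S)"
    by (rule bounded_bilinear.has_vector_derivative[OF bounded_bilinear_inner X c])
  have d: "((\<lambda>x. norm (X x) ^ 3) has_real_derivative (of_nat 3 * norm (X x) ^ 2 * ((X x \<bullet> X') / norm (X x)))) (at x within S)"
    using DERIV_power[OF norm_vderiv[OF X nz], of 3] by (simp add: ac_simps)
  note q = DERIV_divide[OF n[folded has_real_derivative_iff_has_vector_derivative] d]
  have nn: "norm (X x) \<noteq> 0" using nz by simp
  have alg: "(F * N^3 - T * (of_nat 3 * N^2 * (c/N))) / (N^3 * N^3) = F / N^3 - 3*T*c/N^5"
    if "N \<noteq> 0" for F N T c :: real
    using that by (simp add: field_simps power_def)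
  show ?thesis
    apply (rule DERIV_cong[OF q])
    using nn apply simp
    apply (subst alg[OF nn])
    by (simp add: inner_add_right inner_add_left)
qed



lemma poly_id:
  fixes X W a Y :: "real^3"
  shows "(X \<bullet> X) * (- (W \<bullet> cross3 a Y)) + 3 * (X \<bullet> cross3 a Y) * (X \<bullet> W) =
    (X \<bullet> X) * (- (a \<bullet> cross3 W Y) - Y \<bullet> cross3 a W) + 3 * (X \<bullet> cross3 W Y) * (X \<bullet> a)
    + 3 * (X \<bullet> cross3 a W) * (X \<bullet> Y)"
  by (simp add: cross3_def inner_vec_def sum_3 vector_def algebra_simps)


lemma hs_id:
  fixes X W a Y b' :: "real^3"
  assumes "X \<noteq> 0"
  shows "((- W) \<bullet> cross3 a Y + X \<bullet> cross3 0 Y + X \<bullet> cross3 a b') / norm X ^ 3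
          - 3 * (X \<bullet> cross3 a Y) * (X \<bullet> (- W)) / norm X ^ 5
   = - ((a \<bullet> cross3 W Y + X \<bullet> cross3 0 Y + X \<bullet> cross3 W 0) / norm X ^ 3
          - 3 * (X \<bullet> cross3 W Y) * (X \<bullet> a) / norm X ^ 5)
     + (((- Y) \<bullet> cross3 a W + X \<bullet> cross3 0 W + X \<bullet> cross3 a b') / norm X ^ 3
          - 3 * (X \<bullet> cross3 a W) * (X \<bullet> (- Y)) / norm X ^ 5)"
proof -
  define N where "N = norm X"
  have N: "N \<noteq> 0" "X \<bullet> X = N^2" using assms by (auto simp: N_def power2_norm_eq_inner)
  have p: "N^2 * (- (W \<bullet> cross3 a Y)) + 3 * (X \<bullet> cross3 a Y) * (X \<bullet> W) =
    N^2 * (- (a \<bullet> cross3 W Y) - Y \<bullet> cross3 a W) + 3 * (X \<bullet> cross3 W Y) * (X \<bullet> a)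
    + 3 * (X \<bullet> cross3 a W) * (X \<bullet> Y)"
    using poly_id[of X W a Y] N(2) by simp
  have r: "(- k1 + k2) / N^3 - 3 * k3 * (- k4) / N^5 =
     - (k5 / N^3 - 3 * k7 * k8 / N^5) + ((- k6 + k2) / N^3 - 3 * k9 * (- k10) / N^5)"
    if "N^2 * (- k1) + 3 * k3 * k4 = N^2 * (- k5 - k6) + 3 * k7 * k8 + 3 * k9 * k10" "N \<noteq> 0"
    for k1 k2 k3 k4 k5 k6 k7 k8 k9 k10 :: real
  proof -
    have g: "(- k1 + k2) / P - 3 * k3 * (- k4) / (P*Q) =
     - (k5 / P - 3 * k7 * k8 / (P*Q)) + ((- k6 + k2) / P - 3 * k9 * (- k10) / (P*Q))"
      if "Q * (- k1) + 3 * k3 * k4 = Q * (- k5 - k6) + 3 * k7 * k8 + 3 * k9 * k10" "P \<noteq> 0" "Q \<noteq> 0"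
      for P Q :: real
    proof -
      define z where "z = 1 / (P*Q)"
      have i1: "x / P = x * Q * z" for x unfolding z_def using that(3) by simp
      have i2: "x / (P*Q) = x * z" for x unfolding z_def by simp
      have "(- k1 + k2) / P - 3 * k3 * (- k4) / (P*Q) = ((- k1 + k2) * Q + 3 * k3 * k4) * z"
        unfolding i1 i2 by (simp add: algebra_simps)
      also have "\<dots> = (- (k5 * Q - 3 * k7 * k8) + ((- k6 + k2) * Q + 3 * k9 * k10)) * z"
      proof -
        have "(Q * (- k1) + 3 * k3 * k4) * z = (Q * (- k5 - k6) + 3 * k7 * k8 + 3 * k9 * k10) * z"
          using that(1) by simp
        then show ?thesis by (simp add: algebra_simps)
      qed
      also have "\<dots> = - (k5 / P - 3 * k7 * k8 / (P*Q)) + ((- k6 + k2) / P - 3 * k9 * (- k10) / (P*Q))"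
        unfolding i1 i2 by (simp add: algebra_simps)
      finally show ?thesis .
    qed
    have e5: "N^5 = N^3 * N^2" by (simp add: power_add[symmetric])
    show ?thesis unfolding e5 by (rule g) (use that in auto)
  qed
  show ?thesis unfolding N_def[symmetric]
    using r[OF p N(1)] by (simp add: inner_minus_left inner_minus_right)
qed



lemma refl1d:
  fixes g :: "real \<Rightarrow> real"
  assumes "\<And>x. g (x + 1) = g x"
  shows "integral {0..1} (\<lambda>x. g (- x)) = integral {0..1} g"
proof -
  have "integral {0..1} (\<lambda>x. g (- x)) = integral {-1..0} g"
    using Henstock_Kurzweil_Integration.integral_reflect_real[where b=0 and a="-1" and f=g] by simp
  also have "\<dots> = integral {0..1} g"
    using integral_shift_real_ivl[where f=g and a=0 and b=1 and c=1] assms by simp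
  finally show ?thesis .
qed

lemma rev_hvd: assumes "cp c" shows "((\<lambda>x. c (- x)) has_vector_derivative - D c (- t)) (at t)"
proof -
  show ?thesis
    using vector_diff_chain_at[OF has_vector_derivative_minus[OF has_vector_derivative_id], of c "D c (-t)" t] cp_diff[OF assms, of "-t"]
    by (simp add: o_def)
qed

lemma rev_D: assumes "cp c" shows "D (rev_curve c) t = - D c (- t)"
  unfolding rev_curve_def by (rule vector_derivative_at[OF rev_hvd[OF assms]])

lemma cp_rev: assumes "cp c" shows "cp (rev_curve c)"
proof -
  have p: "c (- (t + 1)) = c (- t)" for t
  proof -
    have e: "- (t+1) = -t - 1" by simp
    show ?thesis unfolding e using cp_per[OF assms, of "-t-1"] by simp
  qed
  have "(\<lambda>t. c (- t)) C1_differentiable_on UNIV"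
    unfolding C1_differentiable_on_eq
  proof
    show "\<forall>x\<in>UNIV. (\<lambda>t. c (- t)) differentiable at x"
      using differentiableI_vector[OF rev_hvd[OF assms]] by blast
    have "continuous_on UNIV (\<lambda>t. - D c (- t))"
      by (intro continuous_intros continuous_on_compose2[OF cp_contD[OF assms]]) auto
    then show "continuous_on UNIV (\<lambda>x. vector_derivative (\<lambda>t. c (- t)) (at x))"
      using rev_D[OF assms] unfolding rev_curve_def by simp
  qed
  then show ?thesis unfolding cp_def rev_curve_def using p by simp
qed


lemma gi_per1: assumes "cp c" shows "gi c d (t + 1, u) = gi c d (t, u)"
  unfolding gi_def using cp_per[OF assms] cp_perD[OF assms] by simp

lemma gi_per2: assumes "cp d" shows "gi c d (t, u + 1) = gi c d (t, u)"
  unfolding gi_def using cp_per[OF assms] cp_perD[OF assms] by simp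

lemma box_eq: "cbox (0::real, 0::real) (1, 1) = cbox (0,0) (1,1)" ..

lemma gauss_rev_left:
  assumes c: "cp c" and d: "cp d" and dis: "range c \<inter> range d = {}"
  shows "gauss_lk (rev_curve c) d = - gauss_lk c d"
proof -
  have pw: "gi (rev_curve c) d p = - gi c d (- fst p, snd p)" for p
    unfolding gi_def rev_D[OF c] by (simp add: rev_curve_def)
  have cont: "continuous_on S (gi c d)" for S using gi_cont[OF c d dis] .
  have cont2: "continuous_on S (\<lambda>p. gi c d (- fst p, snd p))" for S
    by (rule continuous_on_compose2[OF cont[of UNIV]]) (auto intro!: continuous_intros)
  define K where "K t = integral {0..1} (\<lambda>u. gi c d (t, u))" for t
  have Kp: "K (t + 1) = K t" for t unfolding K_def using gi_per1[OF c] by simp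
  have "integral (cbox (0,0) (1,1)) (gi (rev_curve c) d)
      = - integral (cbox (0,0) (1,1)) (\<lambda>p. gi c d (- fst p, snd p))"
    unfolding pw by (rule integral_neg)
  also have "integral (cbox (0,0) (1,1)) (\<lambda>p. gi c d (- fst p, snd p))
      = integral {0..1} (\<lambda>t. K (- t))"
    using integral_prod_continuous[OF cont2, of "0::real" "0::real" 1 1] by (simp add: K_def)
  also have "\<dots> = integral {0..1} K" using refl1d[of K] Kp by simp
  also have "\<dots> = integral (cbox (0,0) (1,1)) (gi c d)"
    using integral_prod_continuous[OF cont, of "0::real" "0::real" 1 1] by (simp add: K_def[abs_def])
  finally show ?thesis unfolding gauss_gi by simp
qed

lemma gauss_sym:
  assumes c: "cp c" and d: "cp d" and dis: "range c \<inter> range d = {}"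
  shows "gauss_lk d c = gauss_lk c d"
proof -
  have pw: "gi d c (t, u) = gi c d (u, t)" for t u
  proof -
    have "(d t - c u) \<bullet> cross3 (D d t) (D c u) = (c u - d t) \<bullet> cross3 (D c u) (D d t)"
    proof -
      have "d t - c u = - (c u - d t)" by simp
      moreover have "cross3 (D d t) (D c u) = - cross3 (D c u) (D d t)" by (rule cross_skew)
      ultimately show ?thesis by (simp only: inner_minus_left inner_minus_right minus_minus)
    qed
    then show ?thesis unfolding gi_def by (simp add: norm_minus_commute)
  qed
  have cont: "continuous_on S (gi c d)" for S using gi_cont[OF c d dis] .
  have cont2: "continuous_on S (gi d c)" for S using gi_cont[OF d c] dis by blast
  have cont3: "continuous_on S (\<lambda>(x, y). gi c d (y, x))" for S
  proof -
    have "(\<lambda>(x, y). gi c d (y, x)) = gi d c" using pw by auto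
    then show ?thesis using cont2 by simp
  qed
  have "integral (cbox (0,0) (1,1)) (gi d c) = integral {0..1} (\<lambda>t. integral {0..1} (\<lambda>u. gi c d (u, t)))"
    using integral_prod_continuous[OF cont2, of "0::real" "0::real" 1 1] by (simp add: pw)
  also have "\<dots> = integral {0..1} (\<lambda>u. integral {0..1} (\<lambda>t. gi c d (u, t)))"
    using integral_swap_continuous[OF cont3, where a="0::real" and c="0::real" and b=1 and d=1] by simp
  also have "\<dots> = integral (cbox (0,0) (1,1)) (gi c d)"
    using integral_prod_continuous[OF cont, of "0::real" "0::real" 1 1] by simp
  finally show ?thesis unfolding gauss_gi by simp
qed



lemma hX_u: assumes "cp d" "cp w"
  shows "((\<lambda>u. C - (d u + s *\<^sub>R w u)) has_vector_derivative - (D d u + s *\<^sub>R D w u)) (at u within S)"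
  using has_vector_derivative_diff[OF has_vector_derivative_const
      has_vector_derivative_add[OF has_vector_derivative_at_within[OF cp_diff[OF assms(1)]]
        has_vector_derivative_scaleR[OF DERIV_const has_vector_derivative_at_within[OF cp_diff[OF assms(2)]]]]]
  by simp

lemma hX_s: "((\<lambda>s. C - (E + s *\<^sub>R W)) has_vector_derivative - W) (at s within S)"
  by (auto intro!: derivative_eq_intros)

lemma hY_s: "((\<lambda>s. E + s *\<^sub>R W) has_vector_derivative W) (at s within S)"
  by (auto intro!: derivative_eq_intros)

lemma hX_t: assumes "cp c"
  shows "((\<lambda>t. c t - E) has_vector_derivative D c t) (at t within S)"
  using has_vector_derivative_diff[OF has_vector_derivative_at_within[OF cp_diff[OF assms]] has_vector_derivative_const]
  by simp

lemma hD_sum: assumes "cp d" "cp w"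
  shows "D (\<lambda>u. d u + s *\<^sub>R w u) u = D d u + s *\<^sub>R D w u"
proof -
  have "((\<lambda>u. d u + s *\<^sub>R w u) has_vector_derivative D d u + s *\<^sub>R D w u) (at u)"
    using has_vector_derivative_add[OF cp_diff[OF assms(1)]
        has_vector_derivative_scaleR[OF DERIV_const cp_diff[OF assms(2)]]] by simp
  then show ?thesis by (rule vector_derivative_at)
qed


lemma pushoff_inv:
  assumes c: "cp c" and d: "cp d" and w: "cp w" and ep: "0 \<le> \<epsilon>"
    and nz0: "\<And>s t u. 0 \<le> s \<Longrightarrow> s \<le> \<epsilon> \<Longrightarrow> c t \<noteq> d u + s *\<^sub>R w u"
  shows "gauss_lk c (\<lambda>u. d u + \<epsilon> *\<^sub>R w u) = gauss_lk c d"
proof -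
  define U where "U = {0..\<epsilon>}"
  define X where "X s t u = c t - (d u + s *\<^sub>R w u)" for s t u
  define Y where "Y s u = D d u + s *\<^sub>R D w u" for s u
  have nz: "X s t u \<noteq> 0" if "s \<in> U" for s t u using nz0 that by (auto simp: X_def U_def)
  define h where "h s p = X s (fst p) (snd p) \<bullet> cross3 (D c (fst p)) (Y s (snd p))
      / norm (X s (fst p) (snd p)) ^ 3" for s p
  have gl: "gauss_lk c (\<lambda>u. d u + s *\<^sub>R w u) = 1/(4*pi) * integral (cbox (0,0) (1,1)) (h s)" for s
    unfolding gauss_gi gi_def hD_sum[OF d w] h_def X_def Y_def ..
  define hs where "hs s p =
     ((- w (snd p)) \<bullet> cross3 (D c (fst p)) (Y s (snd p)) + X s (fst p) (snd p) \<bullet> cross3 0 (Y s (snd p))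
       + X s (fst p) (snd p) \<bullet> cross3 (D c (fst p)) (D w (snd p))) / norm (X s (fst p) (snd p)) ^ 3
     - 3 * (X s (fst p) (snd p) \<bullet> cross3 (D c (fst p)) (Y s (snd p))) * (X s (fst p) (snd p) \<bullet> (- w (snd p)))
       / norm (X s (fst p) (snd p)) ^ 5" for s p
  note ci[continuous_intros] = continuous_on_compose2[OF cp_cont[OF c] _ subset_UNIV]
     continuous_on_compose2[OF cp_cont[OF d] _ subset_UNIV]
     continuous_on_compose2[OF cp_cont[OF w] _ subset_UNIV]
     continuous_on_compose2[OF cp_contD[OF c] _ subset_UNIV]
     continuous_on_compose2[OF cp_contD[OF d] _ subset_UNIV]
     continuous_on_compose2[OF cp_contD[OF w] _ subset_UNIV] continuous_on_cross
  have cont_h: "continuous_on S (h s)" if "s \<in> U" for s S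
    unfolding h_def X_def Y_def
    by (intro continuous_intros) (use nz[OF that] in \<open>auto simp: X_def\<close>)
  have cont_hs: "continuous_on (U \<times> cbox (0,0) (1,1)) (\<lambda>(s, p). hs s p)"
    unfolding hs_def X_def Y_def case_prod_unfold
    by (intro continuous_intros) (use nz in \<open>auto simp: X_def\<close>)
  have deriv: "((\<lambda>s. h s p) has_field_derivative hs s p) (at s within U)" if "s \<in> U" for s p
  proof -
    have X': "((\<lambda>s. X s (fst p) (snd p)) has_vector_derivative - w (snd p)) (at s within U)"
      unfolding X_def by (rule hX_s)
    have B': "((\<lambda>s. Y s (snd p)) has_vector_derivative D w (snd p)) (at s within U)"
      unfolding Y_def by (rule hY_s)
    show ?thesis unfolding h_def hs_def
      by (rule trip_deriv[OF X' has_vector_derivative_const B' nz[OF that]])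
  qed
  have zero: "integral (cbox (0,0) (1,1)) (hs s) = 0" if s: "s \<in> U" for s
  proof -
    define N where "N t u = norm (X s t u)" for t u
    define P where "P t u = X s t u \<bullet> cross3 (w u) (Y s u) / norm (X s t u) ^ 3" for t u
    define dP where "dP p = (D c (fst p) \<bullet> cross3 (w (snd p)) (Y s (snd p))
        + X s (fst p) (snd p) \<bullet> cross3 0 (Y s (snd p)) + X s (fst p) (snd p) \<bullet> cross3 (w (snd p)) 0)
        / norm (X s (fst p) (snd p)) ^ 3
      - 3 * (X s (fst p) (snd p) \<bullet> cross3 (w (snd p)) (Y s (snd p))) * (X s (fst p) (snd p) \<bullet> D c (fst p))
        / norm (X s (fst p) (snd p)) ^ 5" for p
    define Q where "Q t u = X s t u \<bullet> cross3 (D c t) (w u) / norm (X s t u) ^ 3" for t u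
    define dQ where "dQ p = ((- Y s (snd p)) \<bullet> cross3 (D c (fst p)) (w (snd p))
        + X s (fst p) (snd p) \<bullet> cross3 0 (w (snd p)) + X s (fst p) (snd p) \<bullet> cross3 (D c (fst p)) (D w (snd p)))
        / norm (X s (fst p) (snd p)) ^ 3
      - 3 * (X s (fst p) (snd p) \<bullet> cross3 (D c (fst p)) (w (snd p))) * (X s (fst p) (snd p) \<bullet> (- Y s (snd p)))
        / norm (X s (fst p) (snd p)) ^ 5" for p
    have hsdec: "hs s p = - dP p + dQ p" for p
      unfolding hs_def dP_def dQ_def by (rule hs_id[OF nz[OF s]])
    have cdP: "continuous_on S dP" for S
      unfolding dP_def X_def Y_def
      by (intro continuous_intros) (use nz[OF s] in \<open>auto simp: X_def\<close>)
    have cdQ: "continuous_on S dQ" for S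
      unfolding dQ_def X_def Y_def
      by (intro continuous_intros) (use nz[OF s] in \<open>auto simp: X_def\<close>)
    have Pd: "((\<lambda>t. P t u) has_vector_derivative dP (t, u)) (at t within {0..1})" for t u
    proof -
      have X': "((\<lambda>t. X s t u) has_vector_derivative D c t) (at t within {0..1})"
        unfolding X_def by (rule hX_t[OF c])
      show ?thesis unfolding P_def dP_def fst_conv snd_conv
        using trip_deriv[OF X' has_vector_derivative_const has_vector_derivative_const nz[OF s]]
        unfolding has_real_derivative_iff_has_vector_derivative .
    qed
    have Qd: "((\<lambda>u. Q t u) has_vector_derivative dQ (t, u)) (at u within {0..1})" for t u
    proof -
      have X': "((\<lambda>u. X s t u) has_vector_derivative - Y s u) (at u within {0..1})"
        unfolding X_def Y_def by (rule hX_u[OF d w])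
      show ?thesis unfolding Q_def dQ_def fst_conv snd_conv
        using trip_deriv[OF X' has_vector_derivative_const has_vector_derivative_at_within[OF cp_diff[OF w]] nz[OF s]]
        unfolding has_real_derivative_iff_has_vector_derivative .
    qed
    have Pp: "P 1 u = P 0 u" for u
      unfolding P_def X_def using cp_per[OF c, of 0] by simp
    have Qp: "Q t 1 = Q t 0" for t
      unfolding Q_def X_def using cp_per[OF d, of 0] cp_per[OF w, of 0] by simp
    have iP: "integral {0..1} (\<lambda>t. dP (t, u)) = 0" for u
      using fundamental_theorem_of_calculus[of 0 1 "\<lambda>t. P t u" "\<lambda>t. dP (t, u)"] Pd Pp
      by (simp add: integral_unique)
    have iQ: "integral {0..1} (\<lambda>u. dQ (t, u)) = 0" for t
      using fundamental_theorem_of_calculus[of 0 1 "\<lambda>u. Q t u" "\<lambda>u. dQ (t, u)"] Qd Qp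
      by (simp add: integral_unique)
    have cdP2: "continuous_on S (\<lambda>(x, y). dP (x, y))" for S using cdP by (simp add: case_prod_unfold)
    have IP: "integral (cbox (0,0) (1,1)) dP = 0"
    proof -
      have "integral (cbox (0,0) (1,1)) dP = integral {0..1} (\<lambda>t. integral {0..1} (\<lambda>u. dP (t, u)))"
        using integral_prod_continuous[OF cdP, where a="0::real" and c="0::real" and b=1 and d=1] by simp
      also have "\<dots> = integral {0..1} (\<lambda>u. integral {0..1} (\<lambda>t. dP (t, u)))"
        using integral_swap_continuous[OF cdP2, where a="0::real" and c="0::real" and b=1 and d=1] by simp
      finally show ?thesis using iP by simp
    qed
    have IQ: "integral (cbox (0,0) (1,1)) dQ = 0"
      using integral_prod_continuous[OF cdQ, where a="0::real" and c="0::real" and b=1 and d=1] iQ by simp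
    have "integral (cbox (0,0) (1,1)) (hs s) = integral (cbox (0,0) (1,1)) (\<lambda>p. - dP p + dQ p)"
      unfolding hsdec ..
    also have "\<dots> = - integral (cbox (0,0) (1,1)) dP + integral (cbox (0,0) (1,1)) dQ"
      using integrable_continuous[OF cdP] integrable_continuous[OF cdQ]
      by (simp add: integral_diff)
    finally show ?thesis using IP IQ by simp
  qed
  have "\<exists>k. \<forall>s\<in>U. integral (cbox (0,0) (1,1)) (h s) = k"
  proof (rule has_field_derivative_zero_constant)
    show "convex U" unfolding U_def by simp
    fix s assume s: "s \<in> U"
    have "((\<lambda>s. integral (cbox (0,0) (1,1)) (h s)) has_field_derivative integral (cbox (0,0) (1,1)) (hs s)) (at s within U)"
      by (rule leibniz_rule_field_derivative[OF deriv integrable_continuous[OF cont_h] cont_hs s])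
        (auto simp: U_def)
    then show "((\<lambda>s. integral (cbox (0,0) (1,1)) (h s)) has_field_derivative 0) (at s within U)"
      using zero[OF s] by simp
  qed
  then have "integral (cbox (0,0) (1,1)) (h \<epsilon>) = integral (cbox (0,0) (1,1)) (h 0)"
    using ep unfolding U_def by auto
  then show ?thesis using gl[of \<epsilon>] gl[of 0] by simp
qed



lemma comb:
  fixes g l :: "nat \<Rightarrow> nat \<Rightarrow> real"
  assumes R: "R \<subseteq> {..<n}"
    and g0: "(\<Sum>i<n. \<Sum>j<n. g i j) = 0"
    and gl: "\<And>i j. i < n \<Longrightarrow> j < n \<Longrightarrow> i \<noteq> j \<Longrightarrow> g i j = l i j"
    and ls: "\<And>i j. i < n \<Longrightarrow> j < n \<Longrightarrow> i \<noteq> j \<Longrightarrow> l i j = l j i"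
  shows "(\<Sum>i<n. \<Sum>j<n. (if i \<in> R then -1 else 1) * (if j \<in> R then -1 else 1) * g i j)
     = - 4 * (\<Sum>i\<in>R. \<Sum>j\<in>{..<n} - R. l i j)"
proof -
  define A where "A = {..<n}"
  define e where "e i = (if i \<in> R then -1 else (1::real))" for i
  define k where "k i j = (1 - e i * e j) * g i j" for i j
  have fA: "finite A" unfolding A_def by simp
  have RA: "R \<subseteq> A" using R unfolding A_def .
  have fR: "finite R" using finite_subset[OF RA fA] .
  have split: "sum f A = sum f (A - R) + sum f R" for f :: "nat \<Rightarrow> real"
    using sum.subset_diff[OF RA fA] .
  have lhs: "(\<Sum>i\<in>A. \<Sum>j\<in>A. e i * e j * g i j) = (\<Sum>i\<in>A. \<Sum>j\<in>A. g i j) - (\<Sum>i\<in>A. \<Sum>j\<in>A. k i j)"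
    unfolding k_def by (simp add: sum_subtractf[symmetric] algebra_simps)
  have k1: "(\<Sum>j\<in>A - R. k i j) = 0" if "i \<in> A - R" for i
    using that by (intro sum.neutral) (auto simp: k_def e_def)
  have k2: "(\<Sum>j\<in>R. k i j) = 0" if "i \<in> R" for i
    using that by (intro sum.neutral) (auto simp: k_def e_def)
  have k3: "(\<Sum>j\<in>R. k i j) = (\<Sum>j\<in>R. 2 * l j i)" if "i \<in> A - R" for i
  proof (intro sum.cong refl)
    fix j assume j: "j \<in> R"
    have "i < n" "j < n" "i \<noteq> j" using that j RA by (auto simp: A_def)
    then show "k i j = 2 * l j i" using that j by (simp add: k_def e_def gl ls)
  qed
  have k4: "(\<Sum>j\<in>A - R. k i j) = (\<Sum>j\<in>A - R. 2 * l i j)" if "i \<in> R" for i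
  proof (intro sum.cong refl)
    fix j assume j: "j \<in> A - R"
    have "i < n" "j < n" "i \<noteq> j" using that j RA by (auto simp: A_def)
    then show "k i j = 2 * l i j" using that j by (simp add: k_def e_def gl)
  qed
  have "(\<Sum>i\<in>A. \<Sum>j\<in>A. k i j) = (\<Sum>i\<in>A - R. \<Sum>j\<in>R. 2 * l j i) + (\<Sum>i\<in>R. \<Sum>j\<in>A - R. 2 * l i j)"
  proof -
    have "(\<Sum>i\<in>A. \<Sum>j\<in>A. k i j) = (\<Sum>i\<in>A. (\<Sum>j\<in>A - R. k i j) + (\<Sum>j\<in>R. k i j))"
      using split by simp
    also have "\<dots> = (\<Sum>i\<in>A - R. (\<Sum>j\<in>A - R. k i j) + (\<Sum>j\<in>R. k i j)) + (\<Sum>i\<in>R. (\<Sum>j\<in>A - R. k i j) + (\<Sum>j\<in>R. k i j))"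
      by (rule split)
    also have "\<dots> = (\<Sum>i\<in>A - R. \<Sum>j\<in>R. 2 * l j i) + (\<Sum>i\<in>R. \<Sum>j\<in>A - R. 2 * l i j)"
      using k1 k2 k3 k4 by simp
    finally show ?thesis .
  qed
  also have "(\<Sum>i\<in>A - R. \<Sum>j\<in>R. 2 * l j i) = (\<Sum>i\<in>R. \<Sum>j\<in>A - R. 2 * l i j)"
    by (rule sum.swap)
  finally have "(\<Sum>i\<in>A. \<Sum>j\<in>A. k i j) = 4 * (\<Sum>i\<in>R. \<Sum>j\<in>A - R. l i j)"
    by (simp add: sum_distrib_left[symmetric])
  then show ?thesis using lhs g0 unfolding A_def e_def by simp
qed



lemma range_rev: "range (rev_curve c) = range c"
  unfolding rev_curve_def by (metis (no_types) image_image surj_def minus_minus range_eqI subsetI subset_antisym image_subset_iff rangeI)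

lemma gauss_rev_right:
  assumes c: "cp c" and d: "cp d" and dis: "range c \<inter> range d = {}"
  shows "gauss_lk c (rev_curve d) = - gauss_lk c d"
proof -
  have dis': "range c \<inter> range (rev_curve d) = {}" using dis range_rev by simp
  have "gauss_lk c (rev_curve d) = gauss_lk (rev_curve d) c"
    using gauss_sym[OF c cp_rev[OF d] dis'] by simp
  also have "\<dots> = - gauss_lk d c" using gauss_rev_left[OF d c] dis by blast
  also have "\<dots> = - gauss_lk c d" using gauss_sym[OF c d dis] by simp
  finally show ?thesis .
qed

lemma gauss_orient:
  assumes c: "cp c" and d: "cp d" and dis: "range c \<inter> range d = {}"
  shows "gauss_lk (if P then rev_curve c else c) (if Q then rev_curve d else d)
     = (if P then -1 else 1) * (if Q then -1 else 1) * gauss_lk c d"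
proof -
  have dis': "range (rev_curve c) \<inter> range d = {}" using dis range_rev by simp
  show ?thesis
    using gauss_rev_left[OF c d dis] gauss_rev_right[OF c d dis]
      gauss_rev_right[OF cp_rev[OF c] d dis'] gauss_rev_left[OF c d dis]
    by auto
qed

theorem lemma4:
  fixes n :: nat and \<gamma> v \<delta> :: "nat \<Rightarrow> real \<Rightarrow> real^3" and a :: real
  assumes "smooth_link n \<gamma>"
    and "\<forall>j<n. framing_field (\<gamma> j) (v j)"
    and "\<forall>j<n. is_pushoff n \<gamma> j (v j) (\<delta> j)"
    and "fr n \<gamma> \<delta> = 0"
    and "a > 0"
  shows "(\<Sum>R\<in>Pow {..<n}. (-1) ^ n * a powr fr n (orient R \<gamma>) (orient R \<delta>))
       = (-1) ^ n * (\<Sum>S\<in>Pow {..<n}. a powr (- 4 * lk_sub n \<gamma> S))"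
proof -
  have cpg: "cp (\<gamma> i)" if "i < n" for i
    using assms(1) that unfolding smooth_link_def smooth_knot_def cp_def by auto
  have disg: "range (\<gamma> i) \<inter> range (\<gamma> j) = {}" if "i < n" "j < n" "i \<noteq> j" for i j
    using assms(1) that unfolding smooth_link_def by auto
  have cpv: "cp (v j)" if "j < n" for j
    using assms(2) that unfolding framing_field_def cp_def by auto
  have po: "\<exists>\<epsilon>>0. \<delta> j = (\<lambda>t. \<gamma> j t + \<epsilon> *\<^sub>R v j t) \<and>
     (\<forall>e. 0 < e \<and> e \<le> \<epsilon> \<longrightarrow> (\<forall>i<n. \<forall>s t. \<gamma> i s \<noteq> \<gamma> j t + e *\<^sub>R v j t))" if "j < n" for j
    using assms(3) that unfolding is_pushoff_def by auto
  have cpd: "cp (\<delta> j)" if j: "j < n" for j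
  proof -
    obtain \<epsilon> where e: "\<delta> j = (\<lambda>t. \<gamma> j t + \<epsilon> *\<^sub>R v j t)" using po[OF j] by auto
    show ?thesis using cpg[OF j] cpv[OF j] unfolding e cp_def by auto
  qed
  have disd: "range (\<gamma> i) \<inter> range (\<delta> j) = {}" if i: "i < n" and j: "j < n" for i j
  proof -
    obtain \<epsilon> where "\<epsilon> > 0" and e: "\<delta> j = (\<lambda>t. \<gamma> j t + \<epsilon> *\<^sub>R v j t)"
      and h: "\<forall>e. 0 < e \<and> e \<le> \<epsilon> \<longrightarrow> (\<forall>i<n. \<forall>s t. \<gamma> i s \<noteq> \<gamma> j t + e *\<^sub>R v j t)"
      using po[OF j] by auto
    show ?thesis using h \<open>\<epsilon> > 0\<close> i unfolding e by force
  qed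
  have gd: "gauss_lk (\<gamma> i) (\<delta> j) = gauss_lk (\<gamma> i) (\<gamma> j)" if i: "i < n" and j: "j < n" and ij: "i \<noteq> j" for i j
  proof -
    obtain \<epsilon> where "\<epsilon> > 0" and e: "\<delta> j = (\<lambda>t. \<gamma> j t + \<epsilon> *\<^sub>R v j t)"
      and h: "\<forall>e. 0 < e \<and> e \<le> \<epsilon> \<longrightarrow> (\<forall>i<n. \<forall>s t. \<gamma> i s \<noteq> \<gamma> j t + e *\<^sub>R v j t)"
      using po[OF j] by auto
    have nz: "\<gamma> i t \<noteq> \<gamma> j u + s *\<^sub>R v j u" if "0 \<le> s" "s \<le> \<epsilon>" for s t u
    proof (cases "s = 0")
      case True then show ?thesis using disg[OF i j ij] by auto
    next
      case False then show ?thesis using h that i by auto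
    qed
    show ?thesis unfolding e
      by (rule pushoff_inv[OF cpg[OF i] cpg[OF j] cpv[OF j]]) (use \<open>\<epsilon> > 0\<close> nz in auto)
  qed
  have frR: "fr n (orient R \<gamma>) (orient R \<delta>) = - 4 * lk_sub n \<gamma> R" if R: "R \<subseteq> {..<n}" for R
  proof -
    have "fr n (orient R \<gamma>) (orient R \<delta>) = (\<Sum>i<n. \<Sum>j<n. (if i \<in> R then -1 else 1) * (if j \<in> R then -1 else 1) * gauss_lk (\<gamma> i) (\<delta> j))"
      unfolding fr_def orient_def
      by (intro sum.cong refl) (simp add: gauss_orient[OF cpg cpd disd])
    also have "\<dots> = - 4 * (\<Sum>i\<in>R. \<Sum>j\<in>{..<n} - R. gauss_lk (\<gamma> i) (\<gamma> j))"
    proof (rule comb[OF R])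
      show "(\<Sum>i<n. \<Sum>j<n. gauss_lk (\<gamma> i) (\<delta> j)) = 0" using assms(4) unfolding fr_def .
      show "gauss_lk (\<gamma> i) (\<delta> j) = gauss_lk (\<gamma> i) (\<gamma> j)" if "i < n" "j < n" "i \<noteq> j" for i j
        using gd that by blast
      show "gauss_lk (\<gamma> i) (\<gamma> j) = gauss_lk (\<gamma> j) (\<gamma> i)" if "i < n" "j < n" "i \<noteq> j" for i j
        using gauss_sym[OF cpg[OF that(1)] cpg[OF that(2)] disg[OF that]] by simp
    qed
    finally show ?thesis unfolding lk_sub_def .
  qed
  have "(\<Sum>R\<in>Pow {..<n}. (-1) ^ n * a powr fr n (orient R \<gamma>) (orient R \<delta>))
      = (\<Sum>R\<in>Pow {..<n}. (-1) ^ n * a powr (- 4 * lk_sub n \<gamma> R))"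
    by (intro sum.cong refl) (simp add: frR)
  then show ?thesis by (simp add: sum_distrib_left)
qed


end
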